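(* Let $U\in C([0,1])\cap C^1((0,1])\cap C^2((0,1))$ satisfy $U''>0$ on $(0,1)$, $\lim_{h\downarrow0}U'(h)=-\infty$, $r\mapsto rU''(r)$ non-decreasing on $(0,1)$, and $U(0)=U(1)=0$. Then for all $r,s,t\in[0,1]$ and $r_0\in(0,1]$, \[U((1-t)r+ts)\ge(1-t)U(r)+tU(s)+rU(1-t)+sU(t),\] \[d_U((1-t)r+ts,r_0)\ge(1-t)d_U(r,r_0)+td_U(s,r_0)+rU(1-t)+sU(t).\]
   Context: $d_U(r,r_0)=U(r)-U(r_0)-(r-r_0)U'(r_0)$ for $r\in[0,1]$, $r_0\in(0,1]$. *)

theory Defs
  imports "HOL-Analysis.Analysis"
begin

text \<open>Bregman-type divergence of U, with U' the (one-sided at 1) derivative of U.\<close>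
definition d_U :: "(real \<Rightarrow> real) \<Rightarrow> (real \<Rightarrow> real) \<Rightarrow> real \<Rightarrow> real \<Rightarrow> real" where
  "d_U U U' r r0 = U r - U r0 - (r - r0) * U' r0"

end

theory Submission
  imports Defs
begin

lemma ext_convex:
  fixes h :: "real \<Rightarrow> real"
  assumes hc: "continuous_on {0..1} h" and hv: "convex_on {0<..<1} h"
  shows "convex_on {0..1} h"
proof (rule convex_onI)
  show "convex {0..(1::real)}" by simp
  fix t x y :: real
  assume t0: "t > 0" and t1: "t < 1" and x: "x \<in> {0..1}" and y: "y \<in> {0..1}"
  define q where "q = (\<lambda>e p. (1 - e) * p + e / 2 :: real)"
  define z where "z = (1 - t) * x + t * y"
  have z: "z \<in> {0..1}" using x y t0 t1 unfolding z_def
    by (auto intro!: convex_bound_le add_nonneg_nonneg mult_nonneg_nonneg)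
  have qin: "q e p \<in> {0<..<1}" if "p \<in> {0..1}" "e \<in> {0<..<1}" for e p
  proof -
    have p0: "0 \<le> p" "p \<le> 1" "0 < e" "e < 1" using that by auto
    have a: "(1 - e) * p \<le> 1 - e" "0 \<le> (1 - e) * p" using p0 by (auto intro: mult_left_le)
    have "0 < (1 - e) * p + e / 2" "(1 - e) * p + e / 2 < 1" using a p0 by linarith+
    then show ?thesis unfolding q_def by simp
  qed
  have ev: "\<forall>\<^sub>F e in at_right 0. e \<in> {0<..<(1::real)}"
    using eventually_at_right_real[of 0 1] by (auto elim: eventually_mono)
  have lim: "((\<lambda>e. q e p) \<longlongrightarrow> p) (at_right 0)" for p
  proof -
    have "((\<lambda>e. (1 - e) * p + e / 2) \<longlongrightarrow> (1 - 0) * p + 0 / 2) (at_right (0::real))"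
      by (intro tendsto_intros) simp
    then show ?thesis unfolding q_def by simp
  qed
  have limh: "((\<lambda>e. h (q e p)) \<longlongrightarrow> h p) (at_right 0)" if "p \<in> {0..1}" for p
    apply (rule continuous_on_tendsto_compose[OF hc lim that])
    using ev by (rule eventually_mono) (use qin[OF that] in fastforce)
  have "((\<lambda>e. h (q e z)) \<longlongrightarrow> h z) (at_right 0)" using limh z by blast
  moreover have "((\<lambda>e. (1 - t) * h (q e x) + t * h (q e y)) \<longlongrightarrow> (1 - t) * h x + t * h y) (at_right 0)"
    by (intro tendsto_intros limh x y)
  moreover have "\<forall>\<^sub>F e in at_right 0. h (q e z) \<le> (1 - t) * h (q e x) + t * h (q e y)"
    using ev
  proof (rule eventually_mono)
    fix e :: real assume e: "e \<in> {0<..<1}"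
    have "q e z = (1 - t) * q e x + t * q e y" unfolding q_def z_def by (simp add: field_simps)
    moreover have "h ((1 - t) *\<^sub>R q e x + t *\<^sub>R q e y) \<le> (1 - t) * h (q e x) + t * h (q e y)"
      using convex_onD[OF hv, of t "q e x" "q e y"] qin[OF x e] qin[OF y e] t0 t1 by auto
    ultimately show "h (q e z) \<le> (1 - t) * h (q e x) + t * h (q e y)" by simp
  qed
  ultimately have "h z \<le> (1 - t) * h x + t * h y"
    by (intro tendsto_le[OF trivial_limit_at_right_real]) 
  then show "h ((1 - t) *\<^sub>R x + t *\<^sub>R y) \<le> (1 - t) * h x + t * h y" by (simp add: z_def)
qed

theorem lemma3p2:
  fixes U U' U'' :: "real \<Rightarrow> real"
  assumes cont: "continuous_on {0..1} U"
    and d1: "\<And>x. x \<in> {0<..1} \<Longrightarrow> (U has_real_derivative U' x) (at x within {0..1})"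
    and c1: "continuous_on {0<..1} U'"
    and d2: "\<And>x. x \<in> {0<..<1} \<Longrightarrow> (U' has_real_derivative U'' x) (at x)"
    and c2: "continuous_on {0<..<1} U''"
    and pos: "\<And>x. x \<in> {0<..<1} \<Longrightarrow> U'' x > 0"
    and lim: "filterlim U' at_bot (at_right 0)"
    and mono: "mono_on {0<..<1} (\<lambda>r. r * U'' r)"
    and U0: "U 0 = 0" and U1: "U 1 = 0"
    and r: "r \<in> {0..1}" and s: "s \<in> {0..1}" and t: "t \<in> {0..1}"
    and r0: "r0 \<in> {0<..1}"
  shows "U ((1 - t) * r + t * s) \<ge> (1 - t) * U r + t * U s + r * U (1 - t) + s * U t
         \<and> d_U U U' ((1 - t) * r + t * s) r0
           \<ge> (1 - t) * d_U U U' r r0 + t * d_U U U' s r0 + r * U (1 - t) + s * U t"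
proof -
  have int01: "interior {0..1::real} = {0<..<1}" by simp
  have dU: "(U has_real_derivative U' x) (at x)" if "x \<in> {0<..<1}" for x
  proof -
    have "(U has_real_derivative U' x) (at x within {0..1})" using d1 that by auto
    moreover have "at x within {0..1} = at x" using that by (intro at_within_interior) (simp add: int01)
    ultimately show ?thesis by simp
  qed
  have convU: "convex_on {0..1} U"
  proof (rule ext_convex[OF cont])
    show "convex_on {0<..<1} U"
      by (rule f''_ge0_imp_convex[where f'=U' and f''=U'']) (auto intro: dU d2 less_imp_le[OF pos])
  qed
  have superadd: "U a + U b \<le> U (a + b)" if a: "a \<ge> 0" and b: "b \<ge> 0" and ab: "a + b \<le> 1" for a b
  proof (cases "a + b = 0")
    case True then have "a = 0" "b = 0" using a b by auto
    then show ?thesis using U0 by simp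
  next
    case False
    then have pos': "a + b > 0" using a b by simp
    have "U ((1 - a/(a+b)) *\<^sub>R 0 + (a/(a+b)) *\<^sub>R (a+b)) \<le> (1 - a/(a+b)) * U 0 + (a/(a+b)) * U (a+b)"
      by (rule convex_onD[OF convU]) (use a b ab pos' in auto)
    then have 1: "U a \<le> (a/(a+b)) * U (a+b)" using pos' U0 by simp
    have "U ((1 - b/(a+b)) *\<^sub>R 0 + (b/(a+b)) *\<^sub>R (a+b)) \<le> (1 - b/(a+b)) * U 0 + (b/(a+b)) * U (a+b)"
      by (rule convex_onD[OF convU]) (use a b ab pos' in auto)
    then have 2: "U b \<le> (b/(a+b)) * U (a+b)" using pos' U0 by simp
    have e1: "a/(a+b) + b/(a+b) = 1" using pos' by (simp add: add_divide_distrib[symmetric])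
    have "(a/(a+b)) * U (a+b) + (b/(a+b)) * U (a+b) = U (a+b)" by (metis e1 distrib_right mult_1_left)
    then show ?thesis using 1 2 by linarith
  qed
  have key: "U (l * x) \<ge> l * U x + x * U l" if l: "l \<in> {0..1}" and x: "x \<in> {0..1}" for l x
  proof (cases "x = 0 \<or> x = 1")
    case True then show ?thesis using U0 U1 by auto
  next
    case False
    then have x': "x \<in> {0<..<1}" using x by auto
    define g where "g = (\<lambda>l. l * U x + x * U l - U (l * x))"
    have gc: "continuous_on {0..1} g"
    proof -
      have "continuous_on {0..1} (\<lambda>l. U (l * x))"
      proof (rule continuous_on_compose2[OF cont])
        show "continuous_on {0..1} (\<lambda>l. l * x)" by (intro continuous_intros)
        show "(\<lambda>l. l * x) ` {0..1} \<subseteq> {0..1}" using x by (auto intro: mult_le_one)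
      qed
      then show ?thesis unfolding g_def by (intro continuous_intros cont)
    qed
    have gv: "convex_on {0<..<1} g"
    proof (rule f''_ge0_imp_convex[where f'="\<lambda>l. U x + x * U' l - x * U' (l * x)"
          and f''="\<lambda>l. x * U'' l - x * x * U'' (l * x)"])
      show "convex {0<..<1::real}" by simp
      fix l :: real assume l: "l \<in> {0<..<1}"
      have lx: "l * x \<in> {0<..<1}" using l x' by (auto intro: mult_less_le_imp_less simp: mult_pos_pos) (smt (verit) mult_le_one mult_less_cancel_left2)
      have lin: "((\<lambda>l. l * x) has_real_derivative x) (at l)"
        by (rule derivative_eq_intros | simp)+
      have c1': "((\<lambda>l. U (l * x)) has_real_derivative U' (l * x) * x) (at l)"
        using DERIV_chain2[where g="\<lambda>l. l * x", OF dU[OF lx] lin] by simp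
      have c2': "((\<lambda>l. U' (l * x)) has_real_derivative U'' (l * x) * x) (at l)"
        using DERIV_chain2[where g="\<lambda>l. l * x", OF d2[OF lx] lin] by simp
      show "(g has_real_derivative (U x + x * U' l - x * U' (l * x))) (at l)"
        unfolding g_def
        by (rule derivative_eq_intros c1' dU[OF l] | simp)+
      show "((\<lambda>l. U x + x * U' l - x * U' (l * x)) has_real_derivative (x * U'' l - x * x * U'' (l * x))) (at l)"
        by (rule derivative_eq_intros c2' d2[OF l] | simp)+
      have "(l * x) * U'' (l * x) \<le> l * U'' l"
        using mono_onD[OF mono lx l] l x' by (auto intro: mult_left_le_one_le) 
      then have "x * ((l * x) * U'' (l * x)) \<le> x * (l * U'' l)" using x' by (auto intro: mult_left_mono)
      then have "l * (x * x * U'' (l * x)) \<le> l * (x * U'' l)" by (simp add: algebra_simps)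
      then have "x * x * U'' (l * x) \<le> x * U'' l" using l by simp
      then show "0 \<le> x * U'' l - x * x * U'' (l * x)" by simp
    qed
    have "convex_on {0..1} g" by (rule ext_convex[OF gc gv])
    from convex_onD[OF this, of l 0 1] l
    have "g l \<le> (1 - l) * g 0 + l * g 1" by simp
    moreover have "g 0 = 0" "g 1 = 0" unfolding g_def using U0 U1 by simp_all
    ultimately show ?thesis unfolding g_def using U0 U1 by simp
  qed
  have A: "(1 - t) * U r + r * U (1 - t) \<le> U ((1 - t) * r)" using key[of "1 - t" r] r t by auto
  have B: "t * U s + s * U t \<le> U (t * s)" using key[of t s] s t by auto
  have C: "U ((1 - t) * r) + U (t * s) \<le> U ((1 - t) * r + t * s)"
  proof (rule superadd)
    show "0 \<le> (1 - t) * r" "0 \<le> t * s" using r s t by auto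
    have "t * s \<le> t" using s t by (auto intro: mult_left_le)
    moreover have "(1 - t) * r \<le> 1 - t" using r t by (auto intro: mult_left_le)
    ultimately show "(1 - t) * r + t * s \<le> 1" by linarith
  qed
  have first: "U ((1 - t) * r + t * s) \<ge> (1 - t) * U r + t * U s + r * U (1 - t) + s * U t"
    using A B C by linarith
  have "d_U U U' ((1 - t) * r + t * s) r0 - ((1 - t) * d_U U U' r r0 + t * d_U U U' s r0)
      = U ((1 - t) * r + t * s) - ((1 - t) * U r + t * U s)"
    unfolding d_U_def by (simp add: algebra_simps)
  then show ?thesis using first by linarith
qed

end
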